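(* Let $\delta>0$ and $k,l\in\mathbb{N}$. Then there exists $n_0\in\mathbb{N}$ such that for every $n\ge n_0$ and every subset $\mathcal{A}$ of $[\{1,\dots,n\}]^k$ with $|\mathcal{A}|\ge\delta\binom{n}{k}$, there exists a plegma family $(s_j)_{j=1}^l$ in $[\mathbb{N}]^k$ with $s_j\in\mathcal{A}$ for every $1\le j\le l$.
   Context: $[A]^k$ is the set of $k$-element subsets of $A$, each identified with its increasing enumeration $s(1)<\dots<s(k)$. A finite sequence $(s_j)_{j=1}^l$ in $[\mathbb{N}]^k$ is a plegma family if $s_1(i)<s_2(i)<\dots<s_l(i)$ for every $1\le i\le k$ and $s_l(i)<s_1(i+1)$ for every $1\le i<k$. *)

theory Defs
  imports Complex_Main
begin

definition enum_elem :: "nat set \<Rightarrow> nat \<Rightarrow> nat" where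
  "enum_elem s i = sorted_list_of_set s ! (i - 1)"

definition ksubsets :: "nat set \<Rightarrow> nat \<Rightarrow> nat set set" where
  "ksubsets A k = {B. B \<subseteq> A \<and> finite B \<and> card B = k}"

definition plegma :: "nat \<Rightarrow> (nat \<Rightarrow> nat set) \<Rightarrow> nat \<Rightarrow> bool" where
  "plegma k s l \<longleftrightarrow>
     (\<forall>j\<in>{1..l}. s j \<in> ksubsets UNIV k) \<and>
     (\<forall>i\<in>{1..k}. \<forall>j\<in>{1..<l}. enum_elem (s j) i < enum_elem (s (Suc j)) i) \<and>
     (l \<ge> 1 \<longrightarrow> (\<forall>i\<in>{1..<k}. enum_elem (s l) i < enum_elem (s 1) (Suc i)))"

end

theory Submission
  imports Defs
begin

lemma choose_le_pow': "(n::nat) choose r \<le> n ^ r"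
  by (cases "r \<le> n") (auto simp: binomial_le_pow binomial_eq_0)

lemma card_ksubsets: "card (ksubsets A k) = card A choose k" if "finite A"
proof -
  have "ksubsets A k = {B. B \<subseteq> A \<and> card B = k}"
    using that by (auto simp: ksubsets_def intro: finite_subset)
  thus ?thesis using n_subsets[OF that] by simp
qed

lemma finite_ksubsets: "finite A \<Longrightarrow> finite (ksubsets A k)"
  unfolding ksubsets_def by (rule finite_subset[of _ "Pow A"]) auto

lemma sorted_shift: "finite T \<Longrightarrow>
  sorted_list_of_set ((\<lambda>x. x + c) ` T) = map (\<lambda>x. x + (c::nat)) (sorted_list_of_set T)"
proof -
  assume f: "finite T"
  let ?L = "sorted_list_of_set T"
  have "(\<lambda>x. x + c) ` T = set (map (\<lambda>x. x + c) ?L)" using f by simp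
  moreover have "sorted (map (\<lambda>x. x + c) ?L)"
    using sorted_sorted_list_of_set[of T] by (simp add: sorted_iff_nth_mono)
  moreover have "distinct (map (\<lambda>x. x + c) ?L)"
    by (simp add: distinct_map inj_on_def)
  ultimately have "sorted_list_of_set (set (map (\<lambda>x. x + c) ?L)) = map (\<lambda>x. x + c) ?L"
    unfolding sorted_list_of_set_sort_remdups by (simp add: distinct_remdups_id sorted_sort_id)
  thus ?thesis using \<open>(\<lambda>x. x + c) ` T = set (map (\<lambda>x. x + c) ?L)\<close> by simp
qed

lemma enum_shift: "finite T \<Longrightarrow> 1 \<le> i \<Longrightarrow> i \<le> card T \<Longrightarrow>
   enum_elem ((\<lambda>x. x + c) ` T) i = enum_elem T i + c"
  unfolding enum_elem_def by (simp add: sorted_shift)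

definition shape :: "nat set \<Rightarrow> nat set" where
  "shape s = (\<lambda>x. x - Min s) ` s"

definition good :: "nat \<Rightarrow> nat set \<Rightarrow> bool" where
  "good G s \<longleftrightarrow> (\<forall>x\<in>s. \<forall>y\<in>s. x < y \<longrightarrow> G \<le> y - x)"

definition Shapes :: "nat \<Rightarrow> nat \<Rightarrow> nat set set" where
  "Shapes n k = {T. T \<subseteq> {0..<n} \<and> 0 \<in> T \<and> card T = k}"

lemma shape_props:
  assumes "s \<in> ksubsets {1..n} k" "k \<ge> 1"
  shows "shape s \<in> Shapes n k" "s = (\<lambda>x. x + Min s) ` shape s"
    "good G s \<Longrightarrow> good G (shape s)" "Min s \<le> n"
proof -
  have fs: "finite s" "card s = k" "s \<subseteq> {1..n}" using assms(1) by (auto simp: ksubsets_def)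
  have ne: "s \<noteq> {}" using fs assms(2) by auto
  have mn: "\<And>x. x \<in> s \<Longrightarrow> Min s \<le> x" using fs by simp
  have mins: "Min s \<in> s" using fs ne by simp
  have inj: "inj_on (\<lambda>x. x - Min s) s" unfolding inj_on_def using mn by (metis le_add_diff_inverse)
  show "Min s \<le> n" using mins fs by auto
  have "Min s \<ge> 1" using mins fs by auto
  hence "shape s \<subseteq> {0..<n}" unfolding shape_def
  proof (intro image_subsetI)
    fix x assume "1 \<le> Min s" "x \<in> s"
    hence "x \<le> n" "1 \<le> x" using fs(3) by auto
    thus "x - Min s \<in> {0..<n}" using \<open>1 \<le> Min s\<close> by auto
  qed
  moreover have "0 \<in> shape s" using mins unfolding shape_def by force
  moreover have "card (shape s) = k" unfolding shape_def using card_image[OF inj] fs by simp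
  ultimately show "shape s \<in> Shapes n k" by (simp add: Shapes_def)
  show "s = (\<lambda>x. x + Min s) ` shape s" unfolding shape_def image_image
    using mn by (auto simp: image_iff intro!: bexI)
  assume g: "good G s"
  show "good G (shape s)" unfolding good_def shape_def
  proof (intro ballI impI)
    fix a b assume "a \<in> (\<lambda>x. x - Min s) ` s" "b \<in> (\<lambda>x. x - Min s) ` s" "a < b"
    then obtain x y where "x \<in> s" "y \<in> s" "a = x - Min s" "b = y - Min s" "a < b" by auto
    moreover have "Min s \<le> x" "Min s \<le> y" using mn \<open>x \<in> s\<close> \<open>y \<in> s\<close> by auto
    ultimately show "G \<le> b - a" using g unfolding good_def by fastforce
  qed
qed

lemma card_Shapes: "k \<ge> 1 \<Longrightarrow> card (Shapes n k) \<le> n ^ (k - 1)"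
proof -
  assume k: "k \<ge> 1"
  have inj: "inj_on (\<lambda>T. T - {0}) (Shapes n k)"
    unfolding inj_on_def Shapes_def by (metis insert_Diff mem_Collect_eq)
  have sub: "(\<lambda>T. T - {0}) ` Shapes n k \<subseteq> ksubsets {0..<n} (k - 1)"
    unfolding Shapes_def ksubsets_def using finite_subset by fastforce
  have "card (Shapes n k) \<le> card (ksubsets {0..<n} (k - 1))"
    using card_inj_on_le[OF inj sub finite_ksubsets] by simp
  also have "\<dots> = n choose (k - 1)" by (simp add: card_ksubsets)
  also have "\<dots> \<le> n ^ (k - 1)" by (rule choose_le_pow')
  finally show ?thesis .
qed

lemma finite_Shapes: "finite (Shapes n k)"
  unfolding Shapes_def by (rule finite_subset[of _ "Pow {0..<n}"]) auto

lemma card_bad: "k \<ge> 1 \<Longrightarrow> card {s \<in> ksubsets {1..n} k. \<not> good G s} \<le> G * n ^ (k - 1)"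
proof -
  assume k: "k \<ge> 1"
  show ?thesis
  proof (cases "k = 1")
    case True
    have "good G s" if "s \<in> ksubsets {1..n} k" for s
    proof -
      have "card s = 1" using that True by (simp add: ksubsets_def)
      then obtain a where "s = {a}" by (rule card_1_singletonE)
      thus ?thesis by (simp add: good_def)
    qed
    hence "{s \<in> ksubsets {1..n} k. \<not> good G s} = {}" by auto
    thus ?thesis by (metis card.empty zero_le)
  next
    case False
    define P where "P x d = {s \<in> ksubsets {1..n} k. x \<in> s \<and> x + d \<in> s}" for x d
    have cP: "card (P x d) \<le> n ^ (k - 2)" if "d \<ge> 1" for x d
    proof -
      have inj: "inj_on (\<lambda>s. s - {x, x + d}) (P x d)"
        unfolding inj_on_def P_def by (metis Diff_partition empty_subsetI insert_subset mem_Collect_eq)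
      have sub: "(\<lambda>s. s - {x, x + d}) ` P x d \<subseteq> ksubsets {1..n} (k - 2)"
        unfolding P_def ksubsets_def using that by (auto simp: card_Diff_subset)
      have "card (P x d) \<le> card (ksubsets {1..n} (k - 2))"
        using card_inj_on_le[OF inj sub finite_ksubsets] by simp
      also have "\<dots> = n choose (k - 2)" by (simp add: card_ksubsets)
      also have "\<dots> \<le> n ^ (k - 2)" by (rule choose_le_pow')
      finally show ?thesis .
    qed
    have "{s \<in> ksubsets {1..n} k. \<not> good G s} \<subseteq> (\<Union>x\<in>{1..n}. \<Union>d\<in>{1..<G}. P x d)"
    proof
      fix s assume "s \<in> {s \<in> ksubsets {1..n} k. \<not> good G s}"
      then obtain x y where "s \<in> ksubsets {1..n} k" "x \<in> s" "y \<in> s" "x < y" "y - x < G"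
        unfolding good_def by auto
      moreover hence "x \<in> {1..n}" by (auto simp: ksubsets_def)
      ultimately show "s \<in> (\<Union>x\<in>{1..n}. \<Union>d\<in>{1..<G}. P x d)"
        unfolding P_def by (intro UN_I[of x] UN_I[of "y - x"]) auto
    qed
    hence "card {s \<in> ksubsets {1..n} k. \<not> good G s} \<le> card (\<Union>x\<in>{1..n}. \<Union>d\<in>{1..<G}. P x d)"
      by (rule card_mono[rotated]) (auto simp: P_def intro!: finite_subset[OF _ finite_ksubsets[of "{1..n}" k]])
    also have "\<dots> \<le> (\<Sum>x\<in>{1..n}. card (\<Union>d\<in>{1..<G}. P x d))" by (rule card_UN_le) simp
    also have "\<dots> \<le> (\<Sum>x\<in>{1..n}. (\<Sum>d\<in>{1..<G}. card (P x d)))"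
      by (intro sum_mono card_UN_le) simp
    also have "\<dots> \<le> (\<Sum>x\<in>{1..n}. (\<Sum>d\<in>{1..<G}. n ^ (k - 2)))"
      by (intro sum_mono cP) auto
    also have "\<dots> = n * ((G - 1) * n ^ (k - 2))" by simp
    also have "\<dots> \<le> G * n ^ (k - 1)"
    proof -
      have "n * n ^ (k - 2) = n ^ (k - 1)" using False k
        by (metis Suc_diff_Suc diff_Suc_1 le_neq_implies_less numeral_2_eq_2 one_add_one plus_1_eq_Suc power_Suc)
      thus ?thesis by (metis diff_le_self mult.left_commute mult_le_mono1)
    qed
    finally show ?thesis .
  qed
qed

lemma div_eq_diff: "(a::nat) div G = b div G \<Longrightarrow> a \<le> b \<Longrightarrow> G > 0 \<Longrightarrow> b - a < G"
proof -
  assume eq: "a div G = b div G" and ab: "a \<le> b" and G: "G > 0"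
  have "a div G * G + a mod G = a" "b div G * G + b mod G = b" by simp_all
  moreover have "a div G * G = b div G * G" using eq by simp
  moreover have "b mod G < G" using G by simp
  ultimately show ?thesis using ab by linarith
qed

lemma build:
  assumes k: "k \<ge> 1" and G: "G > 0" and FA: "F \<subseteq> A" and Fk: "F \<subseteq> ksubsets {1..n} k"
    and Fg: "\<forall>s\<in>F. good G s" and FT: "\<forall>s\<in>F. shape s = T" and Fq: "\<forall>s\<in>F. Min s div G = q"
    and l: "l \<le> card F" "l \<ge> 1" and fin: "finite F"
  shows "\<exists>s. plegma k s l \<and> (\<forall>j\<in>{1..l}. s j \<in> A)"
proof -
  have rep: "t = (\<lambda>x. x + Min t) ` T" if "t \<in> F" for t
  proof -
    have "t \<in> ksubsets {1..n} k" using that Fk by auto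
    thus ?thesis using shape_props(2)[OF _ k, of t n] that FT by auto
  qed
  have injM: "inj_on Min F"
    unfolding inj_on_def using rep by metis
  define M where "M = Min ` F"
  have fM: "finite M" and cM: "card M = card F" using fin injM by (auto simp: M_def card_image)
  define ms where "ms = sorted_list_of_set M"
  have lms: "length ms = card M" by (simp add: ms_def)
  have sms: "sorted_wrt (<) ms" by (simp add: ms_def)
  have setms: "set ms = M" using fM by (simp add: ms_def)
  have "F \<noteq> {}" using l by auto
  then obtain t0 where t0: "t0 \<in> F" by blast
  have t0k: "t0 \<in> ksubsets {1..n} k" using t0 Fk by auto
  have Tsh: "T \<in> Shapes n k" using shape_props(1)[OF t0k k] t0 FT by auto
  hence fT: "finite T" and cT: "card T = k" unfolding Shapes_def using finite_subset by auto
  have gT: "good G T" using shape_props(3)[OF t0k k] t0 FT Fg by auto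
  define s where "s j = (\<lambda>x. x + ms ! (j - 1)) ` T" for j
  have msin: "ms ! (j - 1) \<in> M" if "j \<in> {1..l}" for j
  proof -
    have "j - 1 < length ms" using that l lms cM by auto
    thus ?thesis using setms nth_mem by blast
  qed
  have sA: "s j \<in> A" if jl: "j \<in> {1..l}" for j
  proof -
    obtain t where "t \<in> F" "Min t = ms ! (j - 1)" using msin[OF jl] by (auto simp: M_def)
    hence "s j = t" using rep unfolding s_def by metis
    thus ?thesis using \<open>t \<in> F\<close> FA by auto
  qed
  have cs: "card (s j) = k" for j unfolding s_def using cT by (simp add: card_image inj_on_def)
  have es: "enum_elem (s j) i = enum_elem T i + ms ! (j - 1)" if "1 \<le> i" "i \<le> k" for i j
    unfolding s_def using enum_shift[OF fT that(1)] that cT by simp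
  have eT: "enum_elem T i \<in> T" if "1 \<le> i" "i \<le> k" for i
  proof -
    have "i - 1 < length (sorted_list_of_set T)" using that cT by simp
    hence "sorted_list_of_set T ! (i - 1) \<in> set (sorted_list_of_set T)" by (rule nth_mem)
    thus ?thesis unfolding enum_elem_def using fT by simp
  qed
  have eTlt: "enum_elem T i < enum_elem T (Suc i)" if "1 \<le> i" "i < k" for i
  proof -
    have "sorted_wrt (<) (sorted_list_of_set T)" by simp
    moreover have "i < length (sorted_list_of_set T)" using that cT by simp
    ultimately show ?thesis unfolding enum_elem_def using that
      by (simp add: sorted_wrt_nth_less)
  qed
  have "plegma k s l"
    unfolding plegma_def
  proof (intro conjI ballI impI)
    fix j assume "j \<in> {1..l}"
    show "s j \<in> ksubsets UNIV k" using cs[of j] fT by (simp add: ksubsets_def s_def)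
  next
    fix i j assume i: "i \<in> {1..k}" and j: "j \<in> {1..<l}"
    have "ms ! (j - 1) < ms ! j"
      using sms j l lms cM by (simp add: sorted_wrt_nth_less)
    thus "enum_elem (s j) i < enum_elem (s (Suc j)) i" using es i by simp
  next
    fix i assume "1 \<le> l" and i: "i \<in> {1..<k}"
    have d: "ms ! (l - 1) - ms ! 0 < G"
    proof (cases "l = 1")
      case True thus ?thesis using G by simp
    next
      case False
      have a: "ms ! 0 \<le> ms ! (l - 1)"
        using sms False l lms cM by (simp add: sorted_wrt_nth_less less_imp_le)
      have "ms ! 0 \<in> M" "ms ! (l - 1) \<in> M" using msin[of 1] msin[of l] l by auto
      then obtain t1 t2 where "t1 \<in> F" "t2 \<in> F" "ms ! 0 = Min t1" "ms ! (l - 1) = Min t2"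
        by (auto simp: M_def)
      hence "ms ! 0 div G = ms ! (l - 1) div G" using Fq by auto
      thus ?thesis using div_eq_diff a G by blast
    qed
    have "G \<le> enum_elem T (Suc i) - enum_elem T i"
      using gT eT eTlt i unfolding good_def by auto
    moreover have "enum_elem T i < enum_elem T (Suc i)" using eTlt i by auto
    ultimately have "enum_elem T i + ms ! (l - 1) < enum_elem T (Suc i) + ms ! 0" using d by linarith
    thus "enum_elem (s l) i < enum_elem (s 1) (Suc i)" using es i by simp
  qed
  thus ?thesis using sA by blast
qed

lemma real_div_le: "G > 0 \<Longrightarrow> real (n div G) \<le> real n / real G"
proof -
  assume G: "G > 0"
  have "n div G * G \<le> n" by (rule div_times_less_eq_dividend)
  hence "real (n div G) * real G \<le> real n" by (metis of_nat_le_iff of_nat_mult)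
  thus ?thesis using G by (simp add: le_divide_eq)
qed

lemma count_main:
  assumes k: "k \<ge> 1" and l: "l \<ge> 1" and G: "G > 0" and A: "A \<subseteq> ksubsets {1..n} k"
    and no: "\<not> (\<exists>s. plegma k s l \<and> (\<forall>j\<in>{1..l}. s j \<in> A))"
  shows "card A \<le> (l - 1) * (n ^ (k - 1) * (n div G + 1)) + G * n ^ (k - 1)"
proof -
  have finA: "finite A" using A finite_ksubsets[of "{1..n}" k] finite_subset by auto
  define gA where "gA = {s \<in> A. good G s}"
  define key where "key s = (shape s, Min s div G)" for s
  define Keys where "Keys = Shapes n k \<times> {0..n div G}"
  have fK: "finite Keys" unfolding Keys_def using finite_Shapes by simp
  have cK: "card Keys \<le> n ^ (k - 1) * (n div G + 1)"
  proof -
    have "card Keys = card (Shapes n k) * (n div G + 1)" unfolding Keys_def card_cartesian_product by simp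
    thus ?thesis by (simp only:) (rule mult_le_mono1[OF card_Shapes[OF k]])
  qed
  have keyin: "key s \<in> Keys" if "s \<in> gA" for s
  proof -
    have sk: "s \<in> ksubsets {1..n} k" using that A gA_def by auto
    show ?thesis unfolding key_def Keys_def
      using shape_props(1,4)[OF sk k] div_le_mono by auto
  qed
  define fib where "fib K = {s \<in> gA. key s = K}" for K
  have gsub: "gA \<subseteq> (\<Union>K\<in>Keys. fib K)" using keyin fib_def by auto
  have cfib: "card (fib K) \<le> l - 1" for K
  proof (rule ccontr)
    assume "\<not> card (fib K) \<le> l - 1"
    hence lc: "l \<le> card (fib K)" by simp
    have "\<exists>s. plegma k s l \<and> (\<forall>j\<in>{1..l}. s j \<in> A)"
    proof (rule build[OF k G _ _ _ _ _ lc l])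
      show "fib K \<subseteq> A" "fib K \<subseteq> ksubsets {1..n} k" "\<forall>s\<in>fib K. good G s"
        using A by (auto simp: fib_def gA_def)
      show "\<forall>s\<in>fib K. shape s = fst K" "\<forall>s\<in>fib K. Min s div G = snd K"
        by (auto simp: fib_def key_def)
      show "finite (fib K)" using finA by (auto simp: fib_def gA_def)
    qed
    thus False using no by blast
  qed
  have "card gA \<le> card (\<Union>K\<in>Keys. fib K)"
    by (rule card_mono[OF _ gsub]) (auto intro!: finite_UN_I fK simp: fib_def gA_def finA)
  also have "\<dots> \<le> (\<Sum>K\<in>Keys. card (fib K))" by (rule card_UN_le[OF fK])
  also have "\<dots> \<le> card Keys * (l - 1)" using cfib sum_bounded_above[of Keys "\<lambda>K. card (fib K)" "l - 1"] by simp
  also have "\<dots> \<le> (l - 1) * (n ^ (k - 1) * (n div G + 1))" using cK by (simp add: mult.commute)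
  finally have c1: "card gA \<le> (l - 1) * (n ^ (k - 1) * (n div G + 1))" .
  have "A - gA \<subseteq> {s \<in> ksubsets {1..n} k. \<not> good G s}" using A gA_def by auto
  hence "card (A - gA) \<le> card {s \<in> ksubsets {1..n} k. \<not> good G s}"
    by (rule card_mono[rotated]) (use finite_ksubsets[of "{1..n}" k] in auto)
  also have "\<dots> \<le> G * n ^ (k - 1)" by (rule card_bad[OF k])
  finally have c2: "card (A - gA) \<le> G * n ^ (k - 1)" .
  have "A = gA \<union> (A - gA)" using gA_def by auto
  hence "card A \<le> card gA + card (A - gA)" by (metis card_Un_le)
  thus ?thesis using c1 c2 by linarith
qed

theorem mainTheorem13:
  fixes \<delta> :: real and k l :: nat
  assumes "\<delta> > 0"
  shows "\<exists>n0::nat. \<forall>n\<ge>n0. \<forall>\<A>::nat set set.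
           \<A> \<subseteq> ksubsets {1..n} k \<and> real (card \<A>) \<ge> \<delta> * real (n choose k) \<longrightarrow>
           (\<exists>s. plegma k s l \<and> (\<forall>j\<in>{1..l}. s j \<in> \<A>))"
proof (cases "l = 0")
  case True
  thus ?thesis by (auto simp: plegma_def)
next
  case False
  hence l: "l \<ge> 1" by simp
  show ?thesis
  proof (cases "k = 0")
    case True
    have "\<forall>n\<ge>0. \<forall>\<A>::nat set set.
           \<A> \<subseteq> ksubsets {1..n} k \<and> real (card \<A>) \<ge> \<delta> * real (n choose k) \<longrightarrow>
           (\<exists>s. plegma k s l \<and> (\<forall>j\<in>{1..l}. s j \<in> \<A>))"
    proof (intro allI impI)
      fix n and A :: "nat set set"
      assume h: "A \<subseteq> ksubsets {1..n} k \<and> real (card A) \<ge> \<delta> * real (n choose k)"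
      hence "card A > 0" using assms True by simp
      hence "A \<noteq> {}" by auto
      moreover have "A \<subseteq> {{}}" using h True by (auto simp: ksubsets_def)
      ultimately have "{} \<in> A" by auto
      thus "\<exists>s. plegma k s l \<and> (\<forall>j\<in>{1..l}. s j \<in> A)"
        using True by (intro exI[of _ "\<lambda>j. {}"]) (simp add: plegma_def ksubsets_def)
    qed
    thus ?thesis by blast
  next
    case False
    hence k: "k \<ge> 1" by simp
    define c where "c = \<delta> / real k ^ k"
    have c: "c > 0" using assms k by (simp add: c_def)
    define G where "G = nat \<lceil>2 * real l / c\<rceil> + 1"
    have G0: "G > 0" by (simp add: G_def)
    have Gc: "real G > 2 * real l / c" unfolding G_def by linarith
    define n0 where "n0 = nat \<lceil>2 * (real G + real l) / c\<rceil> + k + 1"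
    show ?thesis
    proof (intro exI[of _ n0] allI impI)
      fix n and A :: "nat set set"
      assume n: "n \<ge> n0"
      assume h: "A \<subseteq> ksubsets {1..n} k \<and> real (card A) \<ge> \<delta> * real (n choose k)"
      show "\<exists>s. plegma k s l \<and> (\<forall>j\<in>{1..l}. s j \<in> A)"
      proof (rule ccontr)
        assume no: "\<not> (\<exists>s. plegma k s l \<and> (\<forall>j\<in>{1..l}. s j \<in> A))"
        have up: "card A \<le> (l - 1) * (n ^ (k - 1) * (n div G + 1)) + G * n ^ (k - 1)"
          using count_main[OF k l G0 _ no] h by blast
        define N where "N = real n ^ (k - 1)"
        have nk: "k \<le> n" using n n0_def by simp
        have npos: "real n > 0" using nk k by simp
        have N: "N > 0" using npos by (simp add: N_def)
        have nbig: "real n > 2 * (real G + real l) / c" using n unfolding n0_def by linarith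
        have "real (card A) \<le> real (l - 1) * (N * (real (n div G) + 1)) + real G * N"
        proof -
          have "real (card A) \<le> real ((l - 1) * (n ^ (k - 1) * (n div G + 1)) + G * n ^ (k - 1))"
            using up by (simp only: of_nat_le_iff)
          thus ?thesis unfolding N_def by (simp only: of_nat_add of_nat_mult of_nat_power of_nat_1)
        qed
        also have "\<dots> \<le> real (l - 1) * (N * (real n / real G + 1)) + real G * N"
          using N by (intro add_mono mult_left_mono) (auto simp: real_div_le G0)
        also have "\<dots> = N * (real (l - 1) * real n / real G + real (l - 1) + real G)"
          by (simp add: algebra_simps)
        also have "\<dots> < N * (c * real n)"
        proof (rule mult_strict_left_mono[OF _ N])
          have "real (l - 1) / real G \<le> real l / real G" using G0
            by (simp add: divide_right_mono)
          also have "\<dots> < c / 2"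
          proof -
            have "2 * real l < real G * c" using Gc c by (simp add: divide_less_eq)
            thus ?thesis using G0 by (simp add: divide_less_eq field_simps)
          qed
          finally have "real (l - 1) / real G * real n \<le> c / 2 * real n"
            using npos by (intro mult_right_mono) auto
          hence "real (l - 1) * real n / real G \<le> c / 2 * real n" by simp
          moreover have "c / 2 * real n > real G + real l"
            using nbig c by (simp add: field_simps)
          moreover have "real (l - 1) \<le> real l" by simp
          ultimately show "real (l - 1) * real n / real G + real (l - 1) + real G < c * real n"
            by linarith
        qed
        also have "\<dots> = \<delta> * (real n / real k) ^ k"
        proof -
          have "real n ^ k = real n * N" unfolding N_def using k
            by (cases k) auto
          thus ?thesis unfolding c_def by (simp add: power_divide)
        qed
        also have "\<dots> \<le> \<delta> * real (n choose k)"
          using binomial_ge_n_over_k_pow_k[OF nk] assms by (intro mult_left_mono) auto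
        finally show False using h by linarith
      qed
    qed
  qed
qed

end
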